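(* Let $C$ be a differentiable convex curve in $\mathbb{R}^2$, and let $\alpha\colon I\to C$ be a differentiable curve moving in the counterclockwise direction about $C$. Let $L(t)=\{\alpha(t)+s\,n(\alpha(t)) : s\in\mathbb{R}\}$ be the line through $\alpha(t)$ and $x_\alpha(t)$. Suppose $\beta(t)=\alpha(t)+s(t)\,n(\alpha(t))$ is any differentiable curve (not necessarily in $C$) with $\beta(t)\in L(t)\setminus\{x_\alpha(t)\}$ for all $t\in I$. Then $(\beta'(t),n(\alpha(t)))$ is a positive basis of $\mathbb{R}^2$ if and only if $\beta(t)$ lies in the same connected component of $L(t)\setminus\{x_\alpha(t)\}$ as $\alpha(t)$.
   Context: $I=[0,1]$. For a differentiable curve $\alpha$: unit tangent $T=\alpha'/\|\alpha'\|$, inner unit normal $n(\alpha(t))=T'/\|T'\|$, curvature $\kappa(t)=\|T'(t)\|/\|\alpha'(t)\|$, center of curvature $x_\alpha(t)=\alpha(t)+\frac{1}{\kappa(t)}n(\alpha(t))$. A basis $(v,w)$ of $\mathbb{R}^2$ is positive if $\det(v,w)>0$. *)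

theory Defs
  imports "HOL-Analysis.Analysis"
begin

text \<open>The parameter interval is I = [0,1]; derivatives are taken within I
  (one-sided at the endpoints).\<close>

definition vd :: "(real \<Rightarrow> 'a::real_normed_vector) \<Rightarrow> real \<Rightarrow> 'a" where
  "vd f t = vector_derivative f (at t within {0..1})"

definition tang :: "(real \<Rightarrow> real^2) \<Rightarrow> real \<Rightarrow> real^2" where
  "tang \<alpha> t = (1 / norm (vd \<alpha> t)) *\<^sub>R vd \<alpha> t"

definition inner_normal :: "(real \<Rightarrow> real^2) \<Rightarrow> real \<Rightarrow> real^2" where
  "inner_normal \<alpha> t = (1 / norm (vd (tang \<alpha>) t)) *\<^sub>R vd (tang \<alpha>) t"

definition curvature :: "(real \<Rightarrow> real^2) \<Rightarrow> real \<Rightarrow> real" where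
  "curvature \<alpha> t = norm (vd (tang \<alpha>) t) / norm (vd \<alpha> t)"

definition curv_center :: "(real \<Rightarrow> real^2) \<Rightarrow> real \<Rightarrow> real^2" where
  "curv_center \<alpha> t = \<alpha> t + (1 / curvature \<alpha> t) *\<^sub>R inner_normal \<alpha> t"

definition normal_line :: "(real \<Rightarrow> real^2) \<Rightarrow> real \<Rightarrow> (real^2) set" where
  "normal_line \<alpha> t = {\<alpha> t + s *\<^sub>R inner_normal \<alpha> t | s. True}"

definition pos_basis :: "real^2 \<Rightarrow> real^2 \<Rightarrow> bool" where
  "pos_basis v w \<longleftrightarrow> det ((\<chi> i j. if j = 1 then v $ i else w $ i) :: real^2^2) > 0"

text \<open>alpha moves counterclockwise about the convex curve frontier K at time t:
  the enclosed region lies strictly to the left of the velocity vector.\<close>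
definition counterclockwise_at :: "(real^2) set \<Rightarrow> (real \<Rightarrow> real^2) \<Rightarrow> real \<Rightarrow> bool" where
  "counterclockwise_at K \<alpha> t \<longleftrightarrow> (\<forall>y \<in> interior K. pos_basis (vd \<alpha> t) (y - \<alpha> t))"

end

theory Submission
  imports Defs
begin

definition cr :: "real^2 \<Rightarrow> real^2 \<Rightarrow> real" where
  "cr v w = v$1 * w$2 - v$2 * w$1"
definition rot :: "real^2 \<Rightarrow> real^2" where
  "rot v = (\<chi> i. if i = 1 then - (v$2) else v$1)"

lemma pos_basis_cr: "pos_basis v w \<longleftrightarrow> cr v w > 0"
  unfolding pos_basis_def det_2 cr_def by (simp add: mult.commute)

lemma inner2: "(v::real^2) \<bullet> w = v$1 * w$1 + v$2 * w$2"
  by (simp add: inner_vec_def sum_2)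

lemma rot_comp[simp]: "rot v $ 1 = - (v$2)" "rot v $ 2 = v$1"
  by (simp_all add: rot_def)

lemma cr_rot: "cr v (rot w) = v \<bullet> w" by (simp add: cr_def inner2)
lemma rot_inner: "rot w \<bullet> w = 0" by (simp add: inner2)
lemma norm_rot: "norm (rot w) = norm w"
  by (simp add: norm_eq_sqrt_inner inner2 algebra_simps)

lemma decomp: assumes "norm T = 1" shows "v = (v \<bullet> T) *\<^sub>R T + cr T v *\<^sub>R rot T"
proof -
  have "T \<bullet> T = 1" using assms by (simp add: dot_square_norm)
  hence h: "T$1 * T$1 + T$2*T$2 = 1" by (simp add: inner2)
  have e1: "(v \<bullet> T) * T$1 + cr T v * (- (T$2)) = v$1 * (T$1 * T$1 + T$2*T$2)"
    by (simp add: inner2 cr_def algebra_simps)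
  have e2: "(v \<bullet> T) * T$2 + cr T v * T$1 = v$2 * (T$1 * T$1 + T$2*T$2)"
    by (simp add: inner2 cr_def algebra_simps)
  show ?thesis unfolding vec_eq_iff forall_2
    using e1 e2 h by simp
qed

lemma bb_cr: "bounded_bilinear cr"
proof (rule bounded_bilinear.intro)
  show "\<exists>K. \<forall>a b. norm (cr a b) \<le> norm a * norm b * K"
  proof (intro exI allI)
    fix a b :: "real^2"
    have "\<bar>a$1\<bar> \<le> norm a" "\<bar>a$2\<bar> \<le> norm a" "\<bar>b$1\<bar> \<le> norm b" "\<bar>b$2\<bar> \<le> norm b"
      by (simp_all add: component_le_norm_cart)
    hence "\<bar>a$1 * b$2\<bar> \<le> norm a * norm b" "\<bar>a$2 * b$1\<bar> \<le> norm a * norm b"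
      by (simp_all add: abs_mult mult_mono')
    thus "norm (cr a b) \<le> norm a * norm b * 2" unfolding cr_def by simp
  qed
qed (simp_all add: cr_def algebra_simps)

lemma cr_self[simp]: "cr v v = 0" by (simp add: cr_def)
lemma cr_scale: "cr (a *\<^sub>R v) w = a * cr v w" "cr v (a *\<^sub>R w) = a * cr v w"
  by (simp_all add: cr_def algebra_simps)
lemma cr_add: "cr v (w + z) = cr v w + cr v z" by (simp add: cr_def algebra_simps)
lemma cr_zero[simp]: "cr 0 w = 0" "cr w 0 = 0" by (simp_all add: cr_def)

lemma cont_cr: "continuous_on S (\<lambda>y. cr a (y - b))"
  unfolding cr_def by (intro continuous_intros)

lemma inv_norm_deriv:
  fixes a :: "real \<Rightarrow> real^2"
  assumes "(a has_vector_derivative a') (at u within S)" "a u \<noteq> 0"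
  shows "\<exists>f'. ((\<lambda>u. 1 / norm (a u)) has_field_derivative f') (at u within S)"
proof -
  have "((\<lambda>u. a u \<bullet> a u) has_vector_derivative (a u \<bullet> a' + a' \<bullet> a u)) (at u within S)"
    by (rule bounded_bilinear.has_vector_derivative[OF bounded_bilinear_inner assms(1) assms(1)])
  hence d: "((\<lambda>u. a u \<bullet> a u) has_field_derivative (a u \<bullet> a' + a' \<bullet> a u)) (at u within S)"
    by (simp add: has_real_derivative_iff_has_vector_derivative)
  have p: "a u \<bullet> a u > 0" using assms(2) by simp
  have q: "((\<lambda>u. sqrt (a u \<bullet> a u)) has_field_derivative (inverse (sqrt (a u \<bullet> a u)) / 2 * (a u \<bullet> a' + a' \<bullet> a u))) (at u within S)"
    by (rule DERIV_chain2[OF DERIV_real_sqrt[OF p] d])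
  have "((\<lambda>u. 1 / sqrt (a u \<bullet> a u)) has_field_derivative ((0 * sqrt (a u \<bullet> a u) - 1 * (inverse (sqrt (a u \<bullet> a u)) / 2 * (a u \<bullet> a' + a' \<bullet> a u))) / (sqrt (a u \<bullet> a u) * sqrt (a u \<bullet> a u)))) (at u within S)"
    by (rule DERIV_divide[OF DERIV_const q]) (use p in simp)
  thus ?thesis by (auto simp: norm_eq_sqrt_inner)
qed

lemma deriv_const_zero:
  fixes g :: "real \<Rightarrow> 'a::euclidean_space"
  assumes u: "u \<in> {0..1}" and g: "\<And>x. x \<in> {0..1} \<Longrightarrow> g x = c"
    and d: "(g has_vector_derivative d) (at u within {0..1})"
  shows "d = 0"
proof -
  have "((\<lambda>x. c) has_vector_derivative d) (at u within {0..1})"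
    by (rule has_vector_derivative_transform[OF u _ d]) (simp add: g)
  moreover have "((\<lambda>x. c) has_vector_derivative 0) (at u within {0..1})"
    by (rule has_vector_derivative_const)
  ultimately show ?thesis
    using vector_derivative_within_closed_interval[of 0 1 u] u by (metis zero_less_one)
qed

lemma sign_lemma:
  fixes \<alpha> a1 :: "real \<Rightarrow> real^2"
  assumes h\<alpha>: "\<And>u. u \<in> {0..1} \<Longrightarrow> (\<alpha> has_vector_derivative a1 u) (at u within {0..1})"
    and h1: "(a1 has_vector_derivative a2) (at t within {0..1})" and t: "t \<in> {0..1}"
    and nonneg: "\<And>v. v \<in> {0..1} \<Longrightarrow> cr (a1 t) (\<alpha> v - \<alpha> t) \<ge> 0"
  shows "cr (a1 t) a2 \<ge> 0"
proof (rule ccontr)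
  assume "\<not> ?thesis" hence neg: "cr (a1 t) a2 < 0" by simp
  define \<psi> where "\<psi> = (\<lambda>v. cr (a1 t) (a1 v))"
  define k where "k = (\<lambda>v. cr (a1 t) (\<alpha> v - \<alpha> t))"
  have bl: "bounded_linear (cr (a1 t))" by (rule bounded_bilinear.bounded_linear_right[OF bb_cr])
  have "(\<psi> has_vector_derivative cr (a1 t) a2) (at t within {0..1})"
    unfolding \<psi>_def by (rule bounded_linear.has_vector_derivative[OF bl h1])
  hence d\<psi>: "(\<psi> has_field_derivative cr (a1 t) a2) (at t within {0..1})"
    by (simp add: has_real_derivative_iff_has_vector_derivative)
  have \<psi>t: "\<psi> t = 0" by (simp add: \<psi>_def)
  have dk: "(k has_field_derivative \<psi> v) (at v within {0..1})" if v: "v \<in> {0..1}" for v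
  proof -
    have "((\<lambda>u. \<alpha> u - \<alpha> t) has_vector_derivative a1 v - 0) (at v within {0..1})"
      by (rule has_vector_derivative_diff[OF h\<alpha>[OF v] has_vector_derivative_const])
    from bounded_linear.has_vector_derivative[OF bl this]
    show ?thesis
      by (simp add: k_def \<psi>_def has_real_derivative_iff_has_vector_derivative)
  qed
  have dk_open: "DERIV k v :> \<psi> v" if "0 < v" "v < 1" for v
  proof -
    have "at v within {0..1} = at v" using that by (intro at_within_interior) auto
    with dk[of v] that show ?thesis by simp
  qed
  have kcont: "continuous_on {0..1} k"
    unfolding continuous_on_eq_continuous_within by (metis dk DERIV_continuous)
  have "((\<lambda>y. (\<psi> y - \<psi> t) / (y - t)) \<longlongrightarrow> cr (a1 t) a2) (at t within {0..1})"
    using d\<psi> by (simp add: has_field_derivative_iff)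
  hence "eventually (\<lambda>y. (\<psi> y - \<psi> t) / (y - t) < 0) (at t within {0..1})"
    using neg by (rule order_tendstoD(2))
  then obtain \<delta> where \<delta>: "\<delta> > 0"
    "\<And>y. y \<in> {0..1} \<Longrightarrow> y \<noteq> t \<Longrightarrow> dist y t < \<delta> \<Longrightarrow> \<psi> y / (y - t) < 0"
    by (auto simp: eventually_at \<psi>t)
  show False
  proof (cases "t < 1")
    case True
    define b where "b = min 1 (t + \<delta>/2)"
    have tb: "t < b" using True \<delta> by (simp add: b_def)
    have "k b < k t"
    proof (rule DERIV_neg_imp_decreasing_open[OF tb])
      fix x assume x: "t < x" "x < b"
      have x01: "0 < x" "x < 1" using x t by (auto simp: b_def)
      have "\<psi> x / (x - t) < 0" using \<delta>(2)[of x] x x01 \<delta>(1) by (auto simp: b_def dist_real_def)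
      hence "\<psi> x < 0" using x by (simp add: divide_less_0_iff)
      thus "\<exists>y. DERIV k x :> y \<and> y < 0" using dk_open x01 by blast
    next
      show "continuous_on {t..b} k" using t by (intro continuous_on_subset[OF kcont]) (auto simp: b_def)
    qed
    moreover have "k t = 0" by (simp add: k_def)
    moreover have "k b \<ge> 0" using nonneg[of b] t tb by (auto simp: k_def b_def)
    ultimately show False by simp
  next
    case False
    hence t1: "t = 1" using t by simp
    define a where "a = max 0 (1 - \<delta>/2)"
    have at: "a < 1" using \<delta> by (simp add: a_def)
    have "k a < k 1"
    proof (rule DERIV_pos_imp_increasing_open[OF at])
      fix x assume x: "a < x" "x < 1"
      have x01: "0 < x" using x by (auto simp: a_def)
      have "\<psi> x / (x - 1) < 0" using \<delta>(2)[of x] x x01 t1 \<delta>(1) by (auto simp: a_def dist_real_def)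
      hence "\<psi> x > 0" using x by (simp add: divide_less_0_iff)
      thus "\<exists>y. DERIV k x :> y \<and> y > 0" using dk_open x01 x by blast
    next
      show "continuous_on {a..1} k" by (intro continuous_on_subset[OF kcont]) (auto simp: a_def)
    qed
    moreover have "k 1 = 0" using t1 by (simp add: k_def)
    moreover have "k a \<ge> 0" using nonneg[of a] t1 at by (auto simp: k_def a_def)
    ultimately show False by simp
  qed
qed


lemma line_inj: "(N::real^2) \<noteq> 0 \<Longrightarrow> (a + x *\<^sub>R N = a + y *\<^sub>R N) \<longleftrightarrow> x = y"
  by (simp add: scaleR_cancel_right)

theorem lemmaD3:
  fixes K C :: "(real^2) set" and \<alpha> \<beta> :: "real \<Rightarrow> real^2"
  assumes "compact K" and "convex K" and "interior K \<noteq> {}"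
    and "C = frontier K"
    and "\<forall>t\<in>{0..1}. \<alpha> t \<in> C"
    and "\<forall>t\<in>{0..1}. \<alpha> differentiable (at t within {0..1})"
    and "\<forall>t\<in>{0..1}. vd \<alpha> differentiable (at t within {0..1})"
    and "\<forall>t\<in>{0..1}. vd (vd \<alpha>) differentiable (at t within {0..1})"
    and "\<forall>t\<in>{0..1}. counterclockwise_at K \<alpha> t"
    and "\<forall>t\<in>{0..1}. vd (tang \<alpha>) t \<noteq> 0"
    and "\<forall>t\<in>{0..1}. \<beta> differentiable (at t within {0..1})"
    and "\<forall>t\<in>{0..1}. \<beta> t \<in> normal_line \<alpha> t - {curv_center \<alpha> t}"
  shows "\<forall>t\<in>{0..1}. pos_basis (vd \<beta> t) (inner_normal \<alpha> t) \<longleftrightarrow>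
           \<beta> t \<in> connected_component_set (normal_line \<alpha> t - {curv_center \<alpha> t}) (\<alpha> t)"
proof (intro ballI)
  fix t :: real assume t: "t \<in> {0..1}"
  define a1 where "a1 = vd \<alpha>"
  define a2 where "a2 = vd a1"
  define T where "T = tang \<alpha>"
  define T' where "T' = vd T"
  have h\<alpha>: "(\<alpha> has_vector_derivative a1 u) (at u within {0..1})" if "u \<in> {0..1}" for u
    using assms(6) that by (simp add: a1_def vd_def vector_derivative_works)
  have h1: "(a1 has_vector_derivative a2 u) (at u within {0..1})" if "u \<in> {0..1}" for u
    using assms(7) that by (simp add: a1_def a2_def vd_def vector_derivative_works)
  have h\<beta>: "(\<beta> has_vector_derivative vd \<beta> t) (at t within {0..1})"
    using assms(11) t by (simp add: vd_def vector_derivative_works)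
  have nz: "a1 u \<noteq> 0" if u: "u \<in> {0..1}" for u
  proof
    assume "a1 u = 0"
    obtain y where "y \<in> interior K" using assms(3) by auto
    with assms(9) u have "pos_basis (a1 u) (y - \<alpha> u)" by (auto simp: counterclockwise_at_def a1_def)
    with \<open>a1 u = 0\<close> show False by (simp add: pos_basis_cr)
  qed
  have Tdef: "T = (\<lambda>u. (1 / norm (a1 u)) *\<^sub>R a1 u)"
    by (simp add: fun_eq_iff T_def tang_def a1_def)
  have normT: "norm (T u) = 1" if "u \<in> {0..1}" for u
    using nz[OF that] by (simp add: Tdef)
  have hT: "(T has_vector_derivative T' u) (at u within {0..1}) \<and>
            (\<exists>f'. T' u = (1 / norm (a1 u)) *\<^sub>R a2 u + f' *\<^sub>R a1 u)" if u: "u \<in> {0..1}" for u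
  proof -
    obtain f' where f': "((\<lambda>u. 1 / norm (a1 u)) has_field_derivative f') (at u within {0..1})"
      using inv_norm_deriv[OF h1[OF u] nz[OF u]] by blast
    have d: "(T has_vector_derivative ((1 / norm (a1 u)) *\<^sub>R a2 u + f' *\<^sub>R a1 u)) (at u within {0..1})"
      unfolding Tdef by (rule has_vector_derivative_scaleR[OF f' h1[OF u]])
    have "T' u = (1 / norm (a1 u)) *\<^sub>R a2 u + f' *\<^sub>R a1 u"
      unfolding T'_def vd_def using vector_derivative_within_closed_interval[OF _ u d] by simp
    with d show ?thesis by auto
  qed
  have orth: "T u \<bullet> T' u = 0" if u: "u \<in> {0..1}" for u
  proof -
    have "((\<lambda>u. T u \<bullet> T u) has_vector_derivative (T u \<bullet> T' u + T' u \<bullet> T u)) (at u within {0..1})"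
      using hT[OF u] by (intro bounded_bilinear.has_vector_derivative[OF bounded_bilinear_inner]) auto
    moreover have "T x \<bullet> T x = 1" if "x \<in> {0..1}" for x
      using normT[OF that] by (simp add: dot_square_norm)
    ultimately have "T u \<bullet> T' u + T' u \<bullet> T u = 0"
      by (intro deriv_const_zero[OF u]) auto
    thus ?thesis by (simp add: inner_commute)
  qed
  have closK: "closure (interior K) \<subseteq> {y. 0 \<le> cr (a1 t) (y - \<alpha> t)}"
  proof (rule closure_minimal)
    show "interior K \<subseteq> {y. 0 \<le> cr (a1 t) (y - \<alpha> t)}"
      using assms(9) t by (auto simp: counterclockwise_at_def pos_basis_cr a1_def less_imp_le)
    show "closed {y. 0 \<le> cr (a1 t) (y - \<alpha> t)}"
      by (rule closed_Collect_le) (auto intro: cont_cr)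
  qed
  have nonneg: "cr (a1 t) (\<alpha> v - \<alpha> t) \<ge> 0" if v: "v \<in> {0..1}" for v
  proof -
    have "\<alpha> v \<in> closure K" using assms(5) assms(4) v by (auto simp: frontier_def)
    hence "\<alpha> v \<in> closure (interior K)" using convex_closure_interior[OF assms(2) assms(3)] by simp
    thus ?thesis using closK by auto
  qed
  have sg: "cr (a1 t) (a2 t) \<ge> 0"
    by (rule sign_lemma[OF h\<alpha> h1[OF t] t nonneg])
  obtain f' where T't: "T' t = (1 / norm (a1 t)) *\<^sub>R a2 t + f' *\<^sub>R a1 t" using hT[OF t] by blast
  define c where "c = cr (T t) (T' t)"
  have "c = (1 / norm (a1 t))^2 * cr (a1 t) (a2 t)"
    unfolding c_def T't by (simp add: Tdef cr_scale cr_add power2_eq_square)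
  hence c_ge: "c \<ge> 0" using sg by simp
  have dc: "T' t = (T' t \<bullet> T t) *\<^sub>R T t + c *\<^sub>R rot (T t)"
    unfolding c_def by (rule decomp[OF normT[OF t]])
  have o0: "T' t \<bullet> T t = 0" using orth[OF t] by (simp add: inner_commute)
  from dc have "T' t = 0 *\<^sub>R T t + c *\<^sub>R rot (T t)" unfolding o0 .
  hence T'rot: "T' t = c *\<^sub>R rot (T t)" by simp
  have "T' t \<noteq> 0" using assms(10) t by (simp add: T'_def T_def)
  hence cpos: "c > 0" using T'rot c_ge by (cases "c = 0") auto
  have nT': "norm (T' t) = c" using T'rot norm_rot normT[OF t] cpos by simp
  define N where "N = rot (T t)"
  have normN: "norm N = 1" using normT[OF t] by (simp add: N_def norm_rot)
  have n_eq: "inner_normal \<alpha> t = N"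
    using nT' T'rot cpos by (simp add: inner_normal_def T'_def[symmetric] T_def[symmetric] N_def)
  define r where "r = norm (a1 t) / c"
  have rpos: "r > 0" using nz[OF t] cpos by (simp add: r_def)
  have center: "curv_center \<alpha> t = \<alpha> t + r *\<^sub>R N"
    using nT' by (simp add: curv_center_def curvature_def n_eq T'_def[symmetric] T_def[symmetric]
        a1_def[symmetric] r_def)
  have line: "normal_line \<alpha> t = {\<alpha> t + s *\<^sub>R N | s. True}"
    by (simp add: normal_line_def n_eq)
  have "\<beta> t \<in> normal_line \<alpha> t" using assms(12) t by auto
  then obtain s where s: "\<beta> t = \<alpha> t + s *\<^sub>R N" by (auto simp: line)
  have "\<beta> t \<noteq> curv_center \<alpha> t" using assms(12) t by auto
  hence sr: "s \<noteq> r" using s center by auto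
  have gz: "(\<beta> u - \<alpha> u) \<bullet> T u = 0" if u: "u \<in> {0..1}" for u
  proof -
    have "\<beta> u \<in> normal_line \<alpha> u" using assms(12) u by auto
    then obtain s' where "\<beta> u = \<alpha> u + s' *\<^sub>R inner_normal \<alpha> u"
      by (auto simp: normal_line_def)
    thus ?thesis using orth[OF u]
      by (simp add: inner_normal_def T'_def[symmetric] T_def[symmetric] inner_commute)
  qed
  have gd: "((\<lambda>u. (\<beta> u - \<alpha> u) \<bullet> T u) has_vector_derivative
          ((\<beta> t - \<alpha> t) \<bullet> T' t + (vd \<beta> t - a1 t) \<bullet> T t)) (at t within {0..1})"
    by (rule bounded_bilinear.has_vector_derivative[OF bounded_bilinear_inner
          has_vector_derivative_diff[OF h\<beta> h\<alpha>[OF t]] conjunct1[OF hT[OF t]]])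
  have "(\<beta> t - \<alpha> t) \<bullet> T' t + (vd \<beta> t - a1 t) \<bullet> T t = 0"
    by (rule deriv_const_zero[OF t _ gd]) (rule gz)
  moreover have "(\<beta> t - \<alpha> t) \<bullet> T' t = s * c"
    using normN by (simp add: s T'rot N_def[symmetric] dot_square_norm)
  moreover have "a1 t \<bullet> T t = norm (a1 t)"
    using nz[OF t] by (simp add: Tdef dot_square_norm power2_eq_square)
  ultimately have bT: "vd \<beta> t \<bullet> T t = norm (a1 t) - s * c"
    by (simp add: inner_diff_left)
  have lhs: "pos_basis (vd \<beta> t) (inner_normal \<alpha> t) \<longleftrightarrow> s < r"
  proof -
    have "pos_basis (vd \<beta> t) (inner_normal \<alpha> t) \<longleftrightarrow> norm (a1 t) - s * c > 0"
      by (simp add: pos_basis_cr n_eq N_def cr_rot bT)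
    also have "\<dots> \<longleftrightarrow> s < r" using cpos by (simp add: r_def field_simps)
    finally show ?thesis .
  qed
  define S where "S = normal_line \<alpha> t - {curv_center \<alpha> t}"
  define p where "p = (\<lambda>x::real. \<alpha> t + x *\<^sub>R N)"
  have N0: "N \<noteq> 0" using normN by auto
  have pinj: "p x = p y \<longleftrightarrow> x = y" for x y
    unfolding p_def by (rule line_inj[OF N0])
  have Lp: "normal_line \<alpha> t = range p" unfolding line p_def by blast
  have Seq: "S = range p - {p r}" unfolding S_def Lp center p_def by (rule refl)
  have pS: "p x \<in> S \<longleftrightarrow> x \<noteq> r" for x
  proof -
    have "p x \<in> range p" by (rule rangeI)
    thus ?thesis unfolding Seq by (simp add: pinj)
  qed
  have rhs: "\<beta> t \<in> connected_component_set S (\<alpha> t) \<longleftrightarrow> s < r"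
  proof
    assume sl: "s < r"
    have c1: "connected (p ` {..<r})"
      by (rule connected_continuous_image) (auto simp: p_def intro!: continuous_intros)
    have c2: "p ` {..<r} \<subseteq> S" using pS by auto
    have "\<alpha> t = p 0" by (simp add: p_def)
    hence c3: "\<alpha> t \<in> p ` {..<r}" using rpos by auto
    have "\<beta> t = p s" by (simp add: s p_def)
    hence c4: "\<beta> t \<in> p ` {..<r}" using sl by auto
    show "\<beta> t \<in> connected_component_set S (\<alpha> t)"
      using connected_component_maximal[OF c3 c1 c2] c4 by blast
  next
    assume b: "\<beta> t \<in> connected_component_set S (\<alpha> t)"
    show "s < r"
    proof (rule ccontr)
      assume "\<not> s < r" hence rs: "r < s" using sr by simp
      define Cc where "Cc = connected_component_set S (\<alpha> t)"
      define h where "h = (\<lambda>y. (y - \<alpha> t) \<bullet> N)"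
      have ci: "connected (h ` Cc)"
        by (rule connected_continuous_image) (auto simp: Cc_def h_def intro!: continuous_intros)
      have NN: "N \<bullet> N = 1" using normN by (simp add: dot_square_norm)
      have "\<alpha> t \<in> S"
      proof (rule ccontr)
        assume "\<alpha> t \<notin> S"
        hence "connected_component_set S (\<alpha> t) = {}" by (rule iffD2[OF connected_component_eq_empty])
        with b show False by (metis equals0D)
      qed
      hence Ccin: "\<alpha> t \<in> Cc" by (simp add: Cc_def)
      have "h (\<alpha> t) = 0" by (simp add: h_def)
      hence i0: "0 \<in> h ` Cc" using Ccin by (rule image_eqI[OF sym])
      have "h (\<beta> t) = s" by (simp add: h_def s NN)
      moreover have "\<beta> t \<in> Cc" using b by (simp add: Cc_def)
      ultimately have iS: "s \<in> h ` Cc" by (rule image_eqI[OF sym])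
      have intv: "\<forall>x\<in>h ` Cc. \<forall>y\<in>h ` Cc. \<forall>z. x \<le> z \<longrightarrow> z \<le> y \<longrightarrow> z \<in> h ` Cc"
        using ci by (simp only: connected_iff_interval)
      have "r \<in> h ` Cc" by (rule intv[rule_format, OF i0 iS]) (use rpos rs in auto)
      then obtain y where y: "y \<in> Cc" "h y = r" by auto
      have "y \<in> S" using y(1) connected_component_subset by (auto simp: Cc_def)
      then obtain x where x: "y = p x" by (auto simp: Seq)
      have "x = r" using y(2) NN by (simp add: h_def x p_def)
      with pS \<open>y \<in> S\<close> x show False by simp
    qed
  qed
  show "pos_basis (vd \<beta> t) (inner_normal \<alpha> t) \<longleftrightarrow>
           \<beta> t \<in> connected_component_set (normal_line \<alpha> t - {curv_center \<alpha> t}) (\<alpha> t)"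
    using lhs rhs unfolding S_def by (rule trans[OF _ sym])
qed

end
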